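(* Let $G=(V,E)$ be a finite graph with a biclique partition $B_1=L_1\times R_1,\dots,B_m=L_m\times R_m$ of its edges, and let $\mathbb{G}=\{h_1,\dots,h_m\}\subseteq\{0,1,\star\}^V$ where $h_i(v)=0$ for $v\in L_i$, $h_i(v)=1$ for $v\in R_i$, $h_i(v)=\star$ otherwise. Let $\overline{\mathbb{G}}\subseteq\{0,1\}^V$ be any disambiguation of $\mathbb{G}$. Then the number of distinct vectors $(\bar h(v))_{\bar h\in\overline{\mathbb{G}}}$, $v\in V$, is at least $\chi(G)$; consequently, if $d$ is the VC dimension of the dual class $\overline{\mathbb{G}}^\top$ (the class of functions $\bar h\mapsto\bar h(v)$ on $\overline{\mathbb{G}}$, one for each $v\in V$), then $\chi(G)\le\sum_{i=0}^{d}\binom{|\overline{\mathbb{G}}|}{i}$.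
   Context: A disambiguation of a partial class $\mathbb{H}\subseteq\{0,1,\star\}^V$ on finite $V$ is a total class $\overline{\mathbb{H}}\subseteq\{0,1\}^V$ such that for every $h\in\mathbb{H}$ there is $\bar h\in\overline{\mathbb{H}}$ with $\bar h(v)=h(v)$ for all $v\in h^{-1}(\{0,1\})$. A biclique partition of $G$ is a family of complete bipartite subgraphs $L_i\times R_i$ (edges $\{u,v\}$, $u\in L_i$, $v\in R_i$) whose edge sets partition $E$. $\chi(G)$ is the chromatic number. The VC dimension of a total class is the largest size of a set on which all $0/1$ patterns are realized. *)

theory Defs
  imports Main "HOL-Library.FuncSet"
begin

definition simple_graph :: "'a set \<Rightarrow> 'a set set \<Rightarrow> bool" where
  "simple_graph V E \<longleftrightarrow> finite V \<and>
     (\<forall>e\<in>E. \<exists>u v. e = {u, v} \<and> u \<noteq> v \<and> u \<in> V \<and> v \<in> V)"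

definition proper_colouring :: "'a set \<Rightarrow> 'a set set \<Rightarrow> nat \<Rightarrow> ('a \<Rightarrow> nat) \<Rightarrow> bool" where
  "proper_colouring V E k f \<longleftrightarrow> f ` V \<subseteq> {..<k} \<and>
     (\<forall>u\<in>V. \<forall>v\<in>V. {u, v} \<in> E \<longrightarrow> f u \<noteq> f v)"

definition chromatic_number :: "'a set \<Rightarrow> 'a set set \<Rightarrow> nat" where
  "chromatic_number V E = (LEAST k. \<exists>f. proper_colouring V E k f)"

definition biclique_edges :: "'a set \<Rightarrow> 'a set \<Rightarrow> 'a set set" where
  "biclique_edges L R = {{u, v} | u v. u \<in> L \<and> v \<in> R}"

definition biclique_partition ::
  "'a set \<Rightarrow> 'a set set \<Rightarrow> nat \<Rightarrow> (nat \<Rightarrow> 'a set) \<Rightarrow> (nat \<Rightarrow> 'a set) \<Rightarrow> bool" where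
  "biclique_partition V E m L R \<longleftrightarrow>
     (\<forall>i<m. L i \<subseteq> V \<and> R i \<subseteq> V \<and> L i \<inter> R i = {} \<and> biclique_edges (L i) (R i) \<subseteq> E) \<and>
     (\<forall>i<m. \<forall>j<m. i \<noteq> j \<longrightarrow> biclique_edges (L i) (R i) \<inter> biclique_edges (L j) (R j) = {}) \<and>
     (\<Union>i<m. biclique_edges (L i) (R i)) = E"

text \<open>Partial functions in {0,1,*}^V: None = *, Some False = 0, Some True = 1.
  The partial concept h_i associated with the biclique L_i x R_i.\<close>
definition biclique_concept :: "'a set \<Rightarrow> 'a set \<Rightarrow> 'a \<Rightarrow> bool option" where
  "biclique_concept L R v =
     (if v \<in> L then Some False else if v \<in> R then Some True else None)"

definition disambiguation :: "'a set \<Rightarrow> ('a \<Rightarrow> bool option) set \<Rightarrow> ('a \<Rightarrow> bool) set \<Rightarrow> bool" where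
  "disambiguation V H Hb \<longleftrightarrow> Hb \<subseteq> (V \<rightarrow>\<^sub>E (UNIV :: bool set)) \<and>
     (\<forall>h\<in>H. \<exists>hb\<in>Hb. \<forall>v\<in>V. \<forall>b. h v = Some b \<longrightarrow> hb v = b)"

definition dual_class :: "'a set \<Rightarrow> ('a \<Rightarrow> bool) set \<Rightarrow> (('a \<Rightarrow> bool) \<Rightarrow> bool) set" where
  "dual_class V Hb = (\<lambda>v. \<lambda>hb\<in>Hb. hb v) ` V"

definition shatters :: "('b \<Rightarrow> bool) set \<Rightarrow> 'b set \<Rightarrow> bool" where
  "shatters C S \<longleftrightarrow> (\<forall>T\<subseteq>S. \<exists>c\<in>C. \<forall>x\<in>S. c x \<longleftrightarrow> x \<in> T)"

definition vc_dim :: "'b set \<Rightarrow> ('b \<Rightarrow> bool) set \<Rightarrow> nat" where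
  "vc_dim X C = Max {card S | S. S \<subseteq> X \<and> shatters C S}"

end

theory Submission imports Defs begin

definition shF :: "'b set set \<Rightarrow> 'b set \<Rightarrow> bool" where
  "shF F S \<longleftrightarrow> (\<forall>T\<subseteq>S. \<exists>A\<in>F. A \<inter> S = T)"

lemma pajor:
  assumes "finite X"
  shows "F \<subseteq> Pow X \<Longrightarrow> card F \<le> card {S. S \<subseteq> X \<and> shF F S}"
  using assms
proof (induction X arbitrary: F rule: finite_induct)
  case empty
  show ?case
  proof (cases "F = {}")
    case True then show ?thesis by simp
  next
    case False
    then have Fe: "F = {{}}" using empty by auto
    have E: "{S. S \<subseteq> {} \<and> shF {{}} S} = {{}}" by (auto simp: shF_def)
    show ?thesis unfolding Fe E by simp
  qed
next
  case (insert x X F)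
  define Fn where "Fn = {A\<in>F. x \<notin> A}"
  define Fy where "Fy = {A\<in>F. x \<in> A}"
  define F0 where "F0 = Fn \<union> (\<lambda>A. A - {x}) ` Fy"
  define F1 where "F1 = Fn \<inter> (\<lambda>A. A - {x}) ` Fy"
  have finF: "finite F" using insert(1,4) by (meson finite_Pow_iff finite_insert finite_subset)
  have fn: "finite Fn" "finite Fy" using finF by (auto simp: Fn_def Fy_def)
  have "F = Fn \<union> Fy" "Fn \<inter> Fy = {}" by (auto simp: Fn_def Fy_def)
  then have cF: "card F = card Fn + card Fy" using fn card_Un_disjoint by metis
  have inj: "inj_on (\<lambda>A. A - {x}) Fy"
    unfolding inj_on_def Fy_def by (metis (mono_tags) insert_Diff mem_Collect_eq)
  have "card Fn + card ((\<lambda>A. A - {x}) ` Fy) = card F0 + card F1"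
    unfolding F0_def F1_def by (rule card_Un_Int) (use fn in auto)
  with inj have c01: "card F = card F0 + card F1" using cF card_image by metis
  have P0: "F0 \<subseteq> Pow X" using insert(4) by (auto simp: F0_def Fn_def Fy_def)
  have P1: "F1 \<subseteq> Pow X" using P0 by (auto simp: F0_def F1_def)
  define sh0 where "sh0 = {S. S \<subseteq> X \<and> shF F0 S}"
  define sh1 where "sh1 = {S. S \<subseteq> X \<and> shF F1 S}"
  have i0: "card F0 \<le> card sh0" using insert.IH[OF P0] sh0_def by simp
  have i1: "card F1 \<le> card sh1" using insert.IH[OF P1] sh1_def by simp
  have fin0: "finite sh0" "finite sh1" using insert(1) by (auto simp: sh0_def sh1_def)
  have d: "sh0 \<inter> insert x ` sh1 = {}" using insert(2) by (auto simp: sh0_def sh1_def)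
  have injx: "inj_on (insert x) sh1" unfolding inj_on_def sh1_def using insert(2)
    by (metis (no_types, lifting) Diff_insert_absorb mem_Collect_eq subset_iff)
  have cu: "card (sh0 \<union> insert x ` sh1) = card sh0 + card sh1"
    using card_Un_disjoint[OF fin0(1) finite_imageI[OF fin0(2)] d] card_image[OF injx] by simp
  have s0: "sh0 \<subseteq> {S. S \<subseteq> insert x X \<and> shF F S}"
  proof
    fix S assume "S \<in> sh0"
    then have S: "S \<subseteq> X" "shF F0 S" by (auto simp: sh0_def)
    have "shF F S" unfolding shF_def
    proof (intro allI impI)
      fix T assume "T \<subseteq> S"
      then obtain A where A: "A \<in> F0" "A \<inter> S = T" using S(2) by (auto simp: shF_def)
      show "\<exists>A\<in>F. A \<inter> S = T"
      proof (cases "A \<in> Fn")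
        case True then show ?thesis using A by (auto simp: Fn_def)
      next
        case False
        then obtain B where "B \<in> Fy" "A = B - {x}" using A(1) by (auto simp: F0_def)
        moreover have "x \<notin> S" using S insert(2) by auto
        ultimately show ?thesis using A by (auto simp: Fy_def)
      qed
    qed
    then show "S \<in> {S. S \<subseteq> insert x X \<and> shF F S}" using S by auto
  qed
  have s1: "insert x ` sh1 \<subseteq> {S. S \<subseteq> insert x X \<and> shF F S}"
  proof
    fix S' assume "S' \<in> insert x ` sh1"
    then obtain S where S: "S \<subseteq> X" "shF F1 S" "S' = insert x S" by (auto simp: sh1_def)
    have xS: "x \<notin> S" using S insert(2) by auto
    have "shF F (insert x S)" unfolding shF_def
    proof (intro allI impI)
      fix T assume T: "T \<subseteq> insert x S"
      have "T - {x} \<subseteq> S" using T by auto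
      then obtain B where B: "B \<in> F1" "B \<inter> S = T - {x}" using S(2) unfolding shF_def
        by blast
      have BF: "B \<in> F" "x \<notin> B" using B(1) by (auto simp: F1_def Fn_def)
      obtain C where C: "C \<in> Fy" "B = C - {x}" using B(1) by (auto simp: F1_def)
      have "insert x B = C" using C by (auto simp: Fy_def)
      then have iB: "insert x B \<in> F" using C(1) by (auto simp: Fy_def)
      show "\<exists>A\<in>F. A \<inter> insert x S = T"
      proof (cases "x \<in> T")
        case True
        have "insert x B \<inter> insert x S = T" using B(2) True by auto
        then show ?thesis using iB by blast
      next
        case False
        have "B \<inter> insert x S = T" using B(2) False BF(2) by auto
        then show ?thesis using BF(1) by blast
      qed
    qed
    then show "S' \<in> {S. S \<subseteq> insert x X \<and> shF F S}" using S by auto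
  qed
  have "finite {S. S \<subseteq> insert x X \<and> shF F S}" using insert(1) by auto
  then have "card (sh0 \<union> insert x ` sh1) \<le> card {S. S \<subseteq> insert x X \<and> shF F S}"
    using s0 s1 by (intro card_mono) auto
  then show ?case using cu c01 i0 i1 by linarith
qed


lemma edge_sep:
  assumes "biclique_partition V E m L R"
    and "disambiguation V ((\<lambda>i. biclique_concept (L i) (R i)) ` {..<m}) Gb"
    and "u \<in> V" "v \<in> V" "{u, v} \<in> E"
  shows "\<exists>hb\<in>Gb. hb u \<noteq> hb v"
proof -
  have U: "(\<Union>i<m. biclique_edges (L i) (R i)) = E" using assms(1) unfolding biclique_partition_def by simp
  obtain i where i: "i < m" "{u, v} \<in> biclique_edges (L i) (R i)"
    using assms(5) unfolding U[symmetric] by (rule UN_E) (simp add: lessThan_iff)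
  then obtain a b where ab: "{u, v} = {a, b}" "a \<in> L i" "b \<in> R i"
    unfolding biclique_edges_def by blast
  have sub: "L i \<subseteq> V" "R i \<subseteq> V" "L i \<inter> R i = {}" using assms(1) i(1)
    unfolding biclique_partition_def by simp_all
  have "biclique_concept (L i) (R i) \<in> (\<lambda>i. biclique_concept (L i) (R i)) ` {..<m}"
    using i(1) by simp
  then obtain hb where hb: "hb \<in> Gb"
    "\<forall>w\<in>V. \<forall>c. biclique_concept (L i) (R i) w = Some c \<longrightarrow> hb w = c"
    using assms(2) unfolding disambiguation_def by blast
  have bL: "b \<notin> L i" using sub(3) ab(3) by blast
  have aV: "a \<in> V" "b \<in> V" using ab sub by blast+
  have "biclique_concept (L i) (R i) a = Some False" using ab(2) by (simp add: biclique_concept_def)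
  then have ha: "hb a = False" using hb(2) aV(1) by blast
  have "biclique_concept (L i) (R i) b = Some True" using ab(3) bL by (simp add: biclique_concept_def)
  then have hbb: "hb b = True" using hb(2) aV(2) by blast
  have "(u = a \<and> v = b) \<or> (u = b \<and> v = a)" using ab(1) by (simp add: doubleton_eq_iff)
  then have "hb u \<noteq> hb v" using ha hbb by blast
  then show ?thesis using hb(1) by blast
qed

theorem mainTheorem8:
  fixes V :: "'a set" and E :: "'a set set" and m :: nat
    and L R :: "nat \<Rightarrow> 'a set" and Gb :: "('a \<Rightarrow> bool) set"
  assumes "simple_graph V E"
    and "biclique_partition V E m L R"
    and "disambiguation V ((\<lambda>i. biclique_concept (L i) (R i)) ` {..<m}) Gb"
  shows "chromatic_number V E \<le> card (dual_class V Gb)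
    \<and> chromatic_number V E \<le> (\<Sum>i\<le>vc_dim Gb (dual_class V Gb). card Gb choose i)"
proof -
  define C where "C = dual_class V Gb"
  define dv where "dv = (\<lambda>v. \<lambda>hb\<in>Gb. hb v)"
  have finV: "finite V" using assms(1) by (simp add: simple_graph_def)
  have C: "C = dv ` V" by (simp add: C_def dv_def dual_class_def)
  have finC: "finite C" using C finV by simp
  obtain g where g: "bij_betw g {0..<card C} C" using ex_bij_betw_nat_finite[OF finC] by blast
  define f where "f = (\<lambda>v. inv_into {0..<card C} g (dv v))"
  have gi: "bij_betw (inv_into {0..<card C} g) C {0..<card C}" using bij_betw_inv_into[OF g] .
  have "proper_colouring V E (card C) f"
    unfolding proper_colouring_def
  proof (intro conjI ballI impI)
    show "f ` V \<subseteq> {..<card C}"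
    proof
      fix y assume "y \<in> f ` V"
      then obtain v where v: "v \<in> V" "y = f v" by blast
      have "dv v \<in> C" using C v(1) by blast
      then have "inv_into {0..<card C} g (dv v) \<in> {0..<card C}" using bij_betwE[OF gi] by blast
      then show "y \<in> {..<card C}" using v(2) unfolding f_def by simp
    qed
  next
    fix u v assume uv: "u \<in> V" "v \<in> V" "{u, v} \<in> E"
    obtain hb where hb: "hb \<in> Gb" "hb u \<noteq> hb v" using edge_sep[OF assms(2,3) uv] by blast
    have "dv u hb = hb u" "dv v hb = hb v" using hb(1) by (simp_all add: dv_def)
    then have ne: "dv u \<noteq> dv v" using hb(2) by metis
    have inC: "dv u \<in> C" "dv v \<in> C" using C uv by blast+
    have "inj_on (inv_into {0..<card C} g) C" using gi by (simp add: bij_betw_def)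
    then show "f u \<noteq> f v" unfolding f_def using inj_onD[OF _ _ inC] ne by blast
  qed
  then have chi: "chromatic_number V E \<le> card C" unfolding chromatic_number_def
    by (intro Least_le exI)
  have finG: "finite Gb"
  proof -
    have "Gb \<subseteq> V \<rightarrow>\<^sub>E (UNIV :: bool set)" using assms(3) by (simp add: disambiguation_def)
    moreover have "finite (V \<rightarrow>\<^sub>E (UNIV :: bool set))" by (rule finite_PiE[OF finV]) simp
    ultimately show ?thesis by (rule finite_subset)
  qed
  define d where "d = vc_dim Gb C"
  have main: "card C \<le> (\<Sum>i\<le>d. card Gb choose i)"
  proof (cases "C = {}")
    case True then show ?thesis by simp
  next
    case False
    define F where "F = (\<lambda>c. {x\<in>Gb. c x}) ` C"
    have injF: "inj_on (\<lambda>c. {x\<in>Gb. c x}) C"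
    proof (rule inj_onI)
      fix c c' assume cc: "c \<in> C" "c' \<in> C" "{x\<in>Gb. c x} = {x\<in>Gb. c' x}"
      obtain v v' where "c = dv v" "c' = dv v'" using cc C by auto
      note vv = this
      show "c = c'"
      proof
        fix x show "c x = c' x"
        proof (cases "x \<in> Gb")
          case True
          have "c x \<longleftrightarrow> x \<in> {x\<in>Gb. c x}" using True by simp
          also have "\<dots> \<longleftrightarrow> c' x" using True cc(3) by simp
          finally show ?thesis by simp
        next
          case False then show ?thesis using vv unfolding dv_def by simp
        qed
      qed
    qed
    have cF: "card F = card C" unfolding F_def using card_image[OF injF] .
    have "F \<subseteq> Pow Gb" unfolding F_def by auto
    from pajor[OF finG this] have p: "card F \<le> card {S. S \<subseteq> Gb \<and> shF F S}" .
    have eqS: "{S. S \<subseteq> Gb \<and> shF F S} = {S. S \<subseteq> Gb \<and> shatters C S}"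
    proof (intro Collect_cong conj_cong refl)
      fix S assume S: "S \<subseteq> Gb"
      show "shF F S = shatters C S"
        unfolding shF_def shatters_def F_def
      proof (intro iffI allI impI)
        fix T assume h: "\<forall>T\<subseteq>S. \<exists>A\<in>(\<lambda>c. {x \<in> Gb. c x}) ` C. A \<inter> S = T" and T: "T \<subseteq> S"
        then obtain c where "c \<in> C" "{x \<in> Gb. c x} \<inter> S = T" by blast
        then show "\<exists>c\<in>C. \<forall>x\<in>S. c x = (x \<in> T)" using S by blast
      next
        fix T assume h: "\<forall>T\<subseteq>S. \<exists>c\<in>C. \<forall>x\<in>S. c x = (x \<in> T)" and T: "T \<subseteq> S"
        then obtain c where "c \<in> C" "\<forall>x\<in>S. c x = (x \<in> T)" by blast
        then have "{x \<in> Gb. c x} \<inter> S = T" using S T by blast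
        then show "\<exists>A\<in>(\<lambda>c. {x \<in> Gb. c x}) ` C. A \<inter> S = T" using \<open>c \<in> C\<close> by blast
      qed
    qed
    define Sh where "Sh = {S. S \<subseteq> Gb \<and> shatters C S}"
    have cSh: "card C \<le> card Sh" using p eqS cF Sh_def by simp
    have "shatters C {}" using False by (auto simp: shatters_def)
    then have ne: "{card S | S. S \<subseteq> Gb \<and> shatters C S} \<noteq> {}" by blast
    have finc: "finite {card S | S. S \<subseteq> Gb \<and> shatters C S}"
    proof -
      have "{card S | S. S \<subseteq> Gb \<and> shatters C S} \<subseteq> card ` Pow Gb" by blast
      then show ?thesis using finG by (meson finite_Pow_iff finite_imageI finite_subset)
    qed
    have "Sh \<subseteq> (\<Union>i\<in>{..d}. {S. S \<subseteq> Gb \<and> card S = i})"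
    proof
      fix S assume "S \<in> Sh"
      then have "S \<subseteq> Gb" "card S \<le> d" using Max_ge[OF finc] unfolding Sh_def d_def vc_dim_def
        by blast+
      then show "S \<in> (\<Union>i\<in>{..d}. {S. S \<subseteq> Gb \<and> card S = i})" by auto
    qed
    moreover have "finite (\<Union>i\<in>{..d}. {S. S \<subseteq> Gb \<and> card S = i})" using finG by auto
    ultimately have "card Sh \<le> card (\<Union>i\<in>{..d}. {S. S \<subseteq> Gb \<and> card S = i})" by (intro card_mono)
    also have "\<dots> \<le> (\<Sum>i\<le>d. card {S. S \<subseteq> Gb \<and> card S = i})" by (rule card_UN_le) simp
    also have "\<dots> = (\<Sum>i\<le>d. card Gb choose i)" using n_subsets[OF finG] by simp
    finally show ?thesis using cSh by linarith
  qed
  have "chromatic_number V E \<le> (\<Sum>i\<le>d. card Gb choose i)" using chi main by (rule order_trans)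
  then show ?thesis using chi unfolding C_def d_def by (intro conjI)
qed

end
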